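(* (Backward transformation compatible with substitutions.) If $\Delta;\Gamma,x{:}A\vdash M:B$ and $\Delta;\Gamma\vdash N:A$ in DCC, then $(M[N/x])^\circ=M^\circ[N^\circ/x]$.
   Context: DCC: expressions $x\mid U_i\mid\Pi x{:}A.B\mid L@M\mid\ell_i\{\overline M\}$ (label names $\ell_i$, lists $\overline M=M_1,\dots,M_n$); type contexts $\Gamma$; label contexts $\Delta::=\cdot\mid\Delta,\ell_i(\{\overline x{:}\overline A\},x{:}A\mapsto L:B)$; substitution standard with $\ell\{\overline M\}[N/x]=\ell\{\overline{M[N/x]}\}$; typing $\Delta;\Gamma\vdash M:A$ by the CC-style rules for variables, universes ($U_i:U_{i+1}$), $\Pi$, application $M@N:B[N/x]$ and conversion, plus: if $\Delta;\Gamma$ is well formed, $\ell(\{\overline x{:}\overline A\},x{:}A\mapsto M:B)\in\Delta$, $|\overline M|=|\overline x|$ and $\Delta;\Gamma\vdash M_k:A_k[M_1/x_1,\dots,M_{k-1}/x_{k-1}]$ for all $k$, then $\Delta;\Gamma\vdash\ell\{\overline M\}:\Pi x{:}A[\overline M/\overline x].B[\overline M/\overline x]$; well-formed label entries satisfy $\Delta;\overline x{:}\overline A,x{:}A\vdash L:B$. Backward transformation to CC (expressions $x\mid U_i\mid\Pi x{:}A.B\mid L\,M\mid\lambda x{:}A.M$), defined on well-typed DCC terms relative to $\Delta$: $x^\circ=x$, $U_i^\circ=U_i$, $(\Pi x{:}A.B)^\circ=\Pi x{:}A^\circ.B^\circ$, $(M@N)^\circ=M^\circ\,N^\circ$, and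 $(\ell\{\overline M\})^\circ=\lambda x{:}A^\circ[\overline{M^\circ}/\overline x].\,L^\circ[\overline{M^\circ}/\overline x]$ where $\ell(\{\overline x{:}\overline A\},x{:}A\mapsto L:B)\in\Delta$; it acts pointwise on type contexts. *)

theory Defs
  imports Main
begin

datatype dterm =
    DVar nat
  | DU nat
  | DPi dterm dterm
  | DApp dterm dterm
  | DLab nat "dterm list"

datatype cterm =
    CVar nat
  | CU nat
  | CPi cterm cterm
  | CApp cterm cterm
  | CLam cterm cterm

fun dlift :: "nat \<Rightarrow> dterm \<Rightarrow> dterm" where
  "dlift k (DVar i) = DVar (if i < k then i else Suc i)"
| "dlift k (DU n) = DU n"
| "dlift k (DPi A B) = DPi (dlift k A) (dlift (Suc k) B)"
| "dlift k (DApp M N) = DApp (dlift k M) (dlift k N)"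
| "dlift k (DLab l Ms) = DLab l (map (dlift k) Ms)"

definition dup :: "(nat \<Rightarrow> dterm) \<Rightarrow> nat \<Rightarrow> dterm" where
  "dup \<sigma> i = (case i of 0 \<Rightarrow> DVar 0 | Suc j \<Rightarrow> dlift 0 (\<sigma> j))"

fun dpsubst :: "(nat \<Rightarrow> dterm) \<Rightarrow> dterm \<Rightarrow> dterm" where
  "dpsubst \<sigma> (DVar i) = \<sigma> i"
| "dpsubst \<sigma> (DU n) = DU n"
| "dpsubst \<sigma> (DPi A B) = DPi (dpsubst \<sigma> A) (dpsubst (dup \<sigma>) B)"
| "dpsubst \<sigma> (DApp M N) = DApp (dpsubst \<sigma> M) (dpsubst \<sigma> N)"
| "dpsubst \<sigma> (DLab l Ms) = DLab l (map (dpsubst \<sigma>) Ms)"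

definition dsubst0 :: "dterm \<Rightarrow> dterm \<Rightarrow> dterm" where
  "dsubst0 M N = dpsubst (\<lambda>i. case i of 0 \<Rightarrow> N | Suc j \<Rightarrow> DVar j) M"

text \<open>Instantiation [M_1..M_n / x_1..x_n] of the parameters of a label; in the
  parameter context x_1..x_n the variable x_n has index 0.\<close>
definition dinst :: "dterm list \<Rightarrow> nat \<Rightarrow> dterm" where
  "dinst Ms i = (if i < length Ms then rev Ms ! i else DVar (i - length Ms))"

fun clift :: "nat \<Rightarrow> cterm \<Rightarrow> cterm" where
  "clift k (CVar i) = CVar (if i < k then i else Suc i)"
| "clift k (CU n) = CU n"
| "clift k (CPi A B) = CPi (clift k A) (clift (Suc k) B)"
| "clift k (CApp M N) = CApp (clift k M) (clift k N)"
| "clift k (CLam A M) = CLam (clift k A) (clift (Suc k) M)"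

definition cup :: "(nat \<Rightarrow> cterm) \<Rightarrow> nat \<Rightarrow> cterm" where
  "cup \<sigma> i = (case i of 0 \<Rightarrow> CVar 0 | Suc j \<Rightarrow> clift 0 (\<sigma> j))"

fun cpsubst :: "(nat \<Rightarrow> cterm) \<Rightarrow> cterm \<Rightarrow> cterm" where
  "cpsubst \<sigma> (CVar i) = \<sigma> i"
| "cpsubst \<sigma> (CU n) = CU n"
| "cpsubst \<sigma> (CPi A B) = CPi (cpsubst \<sigma> A) (cpsubst (cup \<sigma>) B)"
| "cpsubst \<sigma> (CApp M N) = CApp (cpsubst \<sigma> M) (cpsubst \<sigma> N)"
| "cpsubst \<sigma> (CLam A M) = CLam (cpsubst \<sigma> A) (cpsubst (cup \<sigma>) M)"

definition csubst0 :: "cterm \<Rightarrow> cterm \<Rightarrow> cterm" where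
  "csubst0 M N = cpsubst (\<lambda>i. case i of 0 \<Rightarrow> N | Suc j \<Rightarrow> CVar j) M"

definition cinst :: "cterm list \<Rightarrow> nat \<Rightarrow> cterm" where
  "cinst Ms i = (if i < length Ms then rev Ms ! i else CVar (i - length Ms))"

text \<open>A label entry l({x_1:A_1,...,x_n:A_n}, x:A |-> L : B) is
  (l, [A_1,...,A_n], A, L, B).  A_k lives in the context x_1..x_{k-1};
  A in x_1..x_n; L and B in x_1..x_n,x.  Label contexts are lists whose head
  is the most recently added entry; type contexts likewise (head = index 0).\<close>

type_synonym lentry = "nat \<times> dterm list \<times> dterm \<times> dterm \<times> dterm"
type_synonym lctx = "lentry list"
type_synonym tctx = "dterm list"

definition labels :: "lctx \<Rightarrow> nat set" where
  "labels \<Delta> = fst ` set \<Delta>"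

inductive dstep :: "lctx \<Rightarrow> dterm \<Rightarrow> dterm \<Rightarrow> bool" for \<Delta> where
  beta: "(l, As, A, L, B) \<in> set \<Delta> \<Longrightarrow> length Ms = length As \<Longrightarrow>
     dstep \<Delta> (DApp (DLab l Ms) N)
       (dpsubst (\<lambda>i. case i of 0 \<Rightarrow> N | Suc j \<Rightarrow> dinst Ms j) L)"
| pi1: "dstep \<Delta> A A' \<Longrightarrow> dstep \<Delta> (DPi A B) (DPi A' B)"
| pi2: "dstep \<Delta> B B' \<Longrightarrow> dstep \<Delta> (DPi A B) (DPi A B')"
| app1: "dstep \<Delta> M M' \<Longrightarrow> dstep \<Delta> (DApp M N) (DApp M' N)"
| app2: "dstep \<Delta> N N' \<Longrightarrow> dstep \<Delta> (DApp M N) (DApp M N')"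
| lab: "dstep \<Delta> M M' \<Longrightarrow> dstep \<Delta> (DLab l (xs @ M # ys)) (DLab l (xs @ M' # ys))"

definition dconv :: "lctx \<Rightarrow> dterm \<Rightarrow> dterm \<Rightarrow> bool" where
  "dconv \<Delta> = equivclp (dstep \<Delta>)"

inductive wfL :: "lctx \<Rightarrow> bool"
  and wfC :: "lctx \<Rightarrow> tctx \<Rightarrow> bool"
  and hastype :: "lctx \<Rightarrow> tctx \<Rightarrow> dterm \<Rightarrow> dterm \<Rightarrow> bool"
where
  wfL_nil: "wfL []"
| wfL_cons: "wfL \<Delta> \<Longrightarrow> l \<notin> labels \<Delta> \<Longrightarrow> hastype \<Delta> (A # rev As) L B \<Longrightarrow>
     wfL ((l, As, A, L, B) # \<Delta>)"
| wfC_nil: "wfL \<Delta> \<Longrightarrow> wfC \<Delta> []"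
| wfC_cons: "hastype \<Delta> \<Gamma> A (DU i) \<Longrightarrow> wfC \<Delta> (A # \<Gamma>)"
| t_var: "wfC \<Delta> \<Gamma> \<Longrightarrow> i < length \<Gamma> \<Longrightarrow> hastype \<Delta> \<Gamma> (DVar i) ((dlift 0 ^^ Suc i) (\<Gamma> ! i))"
| t_univ: "wfC \<Delta> \<Gamma> \<Longrightarrow> hastype \<Delta> \<Gamma> (DU i) (DU (Suc i))"
| t_pi: "hastype \<Delta> \<Gamma> A (DU i) \<Longrightarrow> hastype \<Delta> (A # \<Gamma>) B (DU j) \<Longrightarrow>
     hastype \<Delta> \<Gamma> (DPi A B) (DU (max i j))"
| t_app: "hastype \<Delta> \<Gamma> M (DPi A B) \<Longrightarrow> hastype \<Delta> \<Gamma> N A \<Longrightarrow> hastype \<Delta> \<Gamma> (DApp M N) (dsubst0 B N)"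
| t_conv: "hastype \<Delta> \<Gamma> M A \<Longrightarrow> hastype \<Delta> \<Gamma> B (DU i) \<Longrightarrow> dconv \<Delta> A B \<Longrightarrow> hastype \<Delta> \<Gamma> M B"
| t_lab: "wfC \<Delta> \<Gamma> \<Longrightarrow> (l, As, A, L, B) \<in> set \<Delta> \<Longrightarrow> length Ms = length As \<Longrightarrow>
     (\<forall>k < length Ms. hastype \<Delta> \<Gamma> (Ms ! k) (dpsubst (dinst (take k Ms)) (As ! k))) \<Longrightarrow>
     hastype \<Delta> \<Gamma> (DLab l Ms) (DPi (dpsubst (dinst Ms) A) (dpsubst (dup (dinst Ms)) B))"

fun btr :: "(nat \<Rightarrow> cterm list \<Rightarrow> cterm) \<Rightarrow> dterm \<Rightarrow> cterm" where
  "btr h (DVar i) = CVar i"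
| "btr h (DU n) = CU n"
| "btr h (DPi A B) = CPi (btr h A) (btr h B)"
| "btr h (DApp M N) = CApp (btr h M) (btr h N)"
| "btr h (DLab l Ms) = h l (map (btr h) Ms)"

text \<open>Label case: (l{Ms})\<degree> = \<lambda>x:A\<degree>[Ms\<degree>/xs]. L\<degree>[Ms\<degree>/xs], where A and L are
  translated relative to the part of \<Delta> preceding the entry of l (the only labels
  they can mention).\<close>
primrec blab :: "lctx \<Rightarrow> nat \<Rightarrow> cterm list \<Rightarrow> cterm" where
  "blab [] l cs = undefined"
| "blab (e # \<Delta>) l cs =
     (case e of (l', As, A, L, B) \<Rightarrow>
        if l = l' then CLam (cpsubst (cinst cs) (btr (blab \<Delta>) A))
                            (cpsubst (cup (cinst cs)) (btr (blab \<Delta>) L))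
        else blab \<Delta> l cs)"

definition bwd :: "lctx \<Rightarrow> dterm \<Rightarrow> cterm" where
  "bwd \<Delta> = btr (blab \<Delta>)"

end

theory Submission
  imports Defs
begin

fun rup :: "(nat \<Rightarrow> nat) \<Rightarrow> nat \<Rightarrow> nat" where
  "rup r 0 = 0" | "rup r (Suc j) = Suc (r j)"

fun crename :: "(nat \<Rightarrow> nat) \<Rightarrow> cterm \<Rightarrow> cterm" where
  "crename r (CVar i) = CVar (r i)"
| "crename r (CU n) = CU n"
| "crename r (CPi A B) = CPi (crename r A) (crename (rup r) B)"
| "crename r (CApp M N) = CApp (crename r M) (crename r N)"
| "crename r (CLam A M) = CLam (crename r A) (crename (rup r) M)"

fun drename :: "(nat \<Rightarrow> nat) \<Rightarrow> dterm \<Rightarrow> dterm" where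
  "drename r (DVar i) = DVar (r i)"
| "drename r (DU n) = DU n"
| "drename r (DPi A B) = DPi (drename r A) (drename (rup r) B)"
| "drename r (DApp M N) = DApp (drename r M) (drename r N)"
| "drename r (DLab l Ms) = DLab l (map (drename r) Ms)"

fun cclosed :: "nat \<Rightarrow> cterm \<Rightarrow> bool" where
  "cclosed n (CVar i) = (i < n)"
| "cclosed n (CU k) = True"
| "cclosed n (CPi A B) = (cclosed n A \<and> cclosed (Suc n) B)"
| "cclosed n (CApp M N) = (cclosed n M \<and> cclosed n N)"
| "cclosed n (CLam A M) = (cclosed n A \<and> cclosed (Suc n) M)"

fun dclosed :: "nat \<Rightarrow> dterm \<Rightarrow> bool" where
  "dclosed n (DVar i) = (i < n)"
| "dclosed n (DU k) = True"
| "dclosed n (DPi A B) = (dclosed n A \<and> dclosed (Suc n) B)"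
| "dclosed n (DApp M N) = (dclosed n M \<and> dclosed n N)"
| "dclosed n (DLab l Ms) = (\<forall>M\<in>set Ms. dclosed n M)"

fun dok :: "lctx \<Rightarrow> dterm \<Rightarrow> bool" where
  "dok D (DVar i) = True"
| "dok D (DU k) = True"
| "dok D (DPi A B) = (dok D A \<and> dok D B)"
| "dok D (DApp M N) = (dok D M \<and> dok D N)"
| "dok D (DLab l Ms) = ((\<exists>As A L B. (l, As, A, L, B) \<in> set D \<and> length Ms = length As)
      \<and> (\<forall>M\<in>set Ms. dok D M))"

lemma clift_rename: "clift k t = crename (\<lambda>i. if i < k then i else Suc i) t"
proof (induction t arbitrary: k)
  case (CPi A B) 
  have "rup (\<lambda>i. if i < k then i else Suc i) = (\<lambda>i. if i < Suc k then i else Suc i)"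
    by (rule ext, rename_tac x, case_tac x, auto)
  then show ?case using CPi by simp
next
  case (CLam A B) 
  have "rup (\<lambda>i. if i < k then i else Suc i) = (\<lambda>i. if i < Suc k then i else Suc i)"
    by (rule ext, rename_tac x, case_tac x, auto)
  then show ?case using CLam by simp
qed auto

lemma clift0: "clift 0 t = crename Suc t"
  using clift_rename[of 0 t] by simp

lemma dlift_rename: "dlift k t = drename (\<lambda>i. if i < k then i else Suc i) t"
proof (induction t arbitrary: k)
  case (DPi A B) 
  have "rup (\<lambda>i. if i < k then i else Suc i) = (\<lambda>i. if i < Suc k then i else Suc i)"
    by (rule ext, rename_tac x, case_tac x, auto)
  then show ?case using DPi by simp
qed auto

lemma dlift0: "dlift 0 t = drename Suc t"
  using dlift_rename[of 0 t] by simp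

lemma cup_rename: "cup (CVar \<circ> r) = CVar \<circ> rup r"
  by (rule ext, simp add: cup_def split: nat.split)

lemma crename_subst: "crename r t = cpsubst (CVar \<circ> r) t"
  by (induction t arbitrary: r) (auto simp: cup_rename)

lemma rup_comp: "rup r \<circ> rup r' = rup (r \<circ> r')"
  by (rule ext, rename_tac x, case_tac x, auto)

lemma crename_crename: "crename r (crename r' t) = crename (r \<circ> r') t"
  by (induction t arbitrary: r r') (auto simp: rup_comp)

lemma cup_rup: "cup \<sigma> \<circ> rup r = cup (\<sigma> \<circ> r)"
  by (rule ext, case_tac x, auto simp: cup_def)

lemma cpsubst_crename: "cpsubst \<sigma> (crename r t) = cpsubst (\<sigma> \<circ> r) t"
  by (induction t arbitrary: \<sigma> r) (auto simp: cup_rup)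

lemma rup_Suc: "rup r \<circ> Suc = Suc \<circ> r"
  by (rule ext, simp)

lemma crename_cup: "crename (rup r) \<circ> cup \<sigma> = cup (crename r \<circ> \<sigma>)"
proof (rule ext)
  fix x show "(crename (rup r) \<circ> cup \<sigma>) x = cup (crename r \<circ> \<sigma>) x"
    by (cases x) (auto simp: cup_def clift0 crename_crename rup_Suc)
qed

lemma crename_cpsubst: "crename r (cpsubst \<sigma> t) = cpsubst (crename r \<circ> \<sigma>) t"
  by (induction t arbitrary: \<sigma> r) (auto simp: crename_cup)

lemma cup_comp: "cpsubst (cup \<tau>) (cup \<sigma> i) = cup (cpsubst \<tau> \<circ> \<sigma>) i"
proof (cases i)
  case 0 then show ?thesis by (simp add: cup_def)
next
  case (Suc j)
  have "cup \<tau> \<circ> Suc = crename Suc \<circ> \<tau>" by (rule ext, simp add: cup_def clift0)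
  then show ?thesis using Suc
    by (simp add: cup_def clift0 cpsubst_crename crename_cpsubst)
qed

lemma cpsubst_comp: "cpsubst \<tau> (cpsubst \<sigma> t) = cpsubst (cpsubst \<tau> \<circ> \<sigma>) t"
proof (induction t arbitrary: \<sigma> \<tau>)
  case (CPi A B) then show ?case by (simp add: cup_comp comp_def)
next
  case (CLam A B) then show ?case by (simp add: cup_comp comp_def)
qed auto

lemma cup_lift_comm: "cpsubst (cup \<tau>) (clift 0 t) = clift 0 (cpsubst \<tau> t)"
proof -
  have "cup \<tau> \<circ> Suc = crename Suc \<circ> \<tau>" by (rule ext, simp add: cup_def clift0)
  then show ?thesis by (simp add: clift0 cpsubst_crename crename_cpsubst)
qed

lemma cpsubst_cong: "cclosed n t \<Longrightarrow> (\<forall>i<n. \<sigma> i = \<sigma>' i) \<Longrightarrow> cpsubst \<sigma> t = cpsubst \<sigma>' t"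
proof (induction t arbitrary: n \<sigma> \<sigma>')
  case (CPi A B)
  have "\<forall>i<Suc n. cup \<sigma> i = cup \<sigma>' i" using CPi.prems by (auto simp: cup_def split: nat.split)
  then show ?case using CPi by auto
next
  case (CLam A B)
  have "\<forall>i<Suc n. cup \<sigma> i = cup \<sigma>' i" using CLam.prems by (auto simp: cup_def split: nat.split)
  then show ?case using CLam by auto
qed auto

lemma crename_closed: "cclosed n t \<Longrightarrow> (\<forall>i<n. r i < m) \<Longrightarrow> cclosed m (crename r t)"
proof (induction t arbitrary: n m r)
  case (CPi A B)
  have "\<forall>i<Suc n. rup r i < Suc m" using CPi.prems by (auto simp: less_Suc_eq_0_disj)
  then show ?case using CPi by auto
next
  case (CLam A B)
  have "\<forall>i<Suc n. rup r i < Suc m" using CLam.prems by (auto simp: less_Suc_eq_0_disj)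
  then show ?case using CLam by auto
qed auto

lemma crename_Suc_closed: "cclosed m t \<Longrightarrow> cclosed (Suc m) (crename Suc t)"
  by (erule crename_closed) simp

lemma cpsubst_closed: "cclosed n t \<Longrightarrow> (\<forall>i<n. cclosed m (\<sigma> i)) \<Longrightarrow> cclosed m (cpsubst \<sigma> t)"
proof (induction t arbitrary: n m \<sigma>)
  case (CPi A B)
  have "\<forall>i<Suc n. cclosed (Suc m) (cup \<sigma> i)"
  proof (intro allI impI)
    fix i assume "i < Suc n" then show "cclosed (Suc m) (cup \<sigma> i)" using CPi.prems
      by (cases i) (auto simp: cup_def clift0 intro!: crename_Suc_closed)
  qed
  then show ?case using CPi by auto
next
  case (CLam A B)
  have "\<forall>i<Suc n. cclosed (Suc m) (cup \<sigma> i)"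
  proof (intro allI impI)
    fix i assume "i < Suc n" then show "cclosed (Suc m) (cup \<sigma> i)" using CLam.prems
      by (cases i) (auto simp: cup_def clift0 intro!: crename_Suc_closed)
  qed
  then show ?case using CLam by auto
qed auto

lemma typing_facts:
  "wfL D \<Longrightarrow> True"
  "wfC D G \<Longrightarrow> wfL D"
  "hastype D G M T \<Longrightarrow> wfL D \<and> wfC D G \<and> dok D M \<and> dclosed (length G) M"
proof (induction rule: wfL_wfC_hastype.inducts)
  case (t_lab D G l As A L B Ms)
  then show ?case by (auto simp: in_set_conv_nth) blast
qed auto

lemma rev_nth_mem[simp]: "i < length cs \<Longrightarrow> rev cs ! i \<in> set cs"
  by (metis length_rev nth_mem set_rev)

lemma cinst_closed: "\<forall>c\<in>set cs. cclosed m c \<Longrightarrow> i < length cs \<Longrightarrow> cclosed m (cinst cs i)"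
  by (auto simp: cinst_def)

lemma blab_props:
  "wfL D \<Longrightarrow>
   (\<forall>l cs m. (\<exists>As A L B. (l, As, A, L, B) \<in> set D \<and> length cs = length As) \<longrightarrow>
        (\<forall>c\<in>set cs. cclosed m c) \<longrightarrow> cclosed m (blab D l cs)) \<and>
   (\<forall>l cs \<tau>. (\<exists>As A L B. (l, As, A, L, B) \<in> set D \<and> length cs = length As) \<longrightarrow>
        blab D l (map (cpsubst \<tau>) cs) = cpsubst \<tau> (blab D l cs))"
proof (induction D)
  case Nil then show ?case by simp
next
  case (Cons e D)
  obtain l' As' A' L' B' where e: "e = (l', As', A', L', B')" by (cases e) auto
  from Cons.prems e have wfD: "wfL D" and fresh: "l' \<notin> labels D"
     and ty: "hastype D (A' # rev As') L' B'"
    by (auto elim: wfL.cases)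
  from Cons.IH[OF wfD] have IH1: "\<And>l cs m. (\<exists>As A L B. (l, As, A, L, B) \<in> set D \<and> length cs = length As) \<Longrightarrow>
        (\<forall>c\<in>set cs. cclosed m c) \<Longrightarrow> cclosed m (blab D l cs)"
    and IH2: "\<And>l cs \<tau>. (\<exists>As A L B. (l, As, A, L, B) \<in> set D \<and> length cs = length As) \<Longrightarrow>
        blab D l (map (cpsubst \<tau>) cs) = cpsubst \<tau> (blab D l cs)" by blast+
  have btr_closed: "\<And>M m. dok D M \<Longrightarrow> dclosed m M \<Longrightarrow> cclosed m (btr (blab D) M)"
  proof -
    fix M m show "dok D M \<Longrightarrow> dclosed m M \<Longrightarrow> cclosed m (btr (blab D) M)"
    proof (induction M arbitrary: m)
      case (DLab l Ms)
      then show ?case by (auto intro!: IH1) blast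
    qed auto
  qed
  from typing_facts(3)[OF ty] have okL: "dok D L'" and clL: "dclosed (Suc (length As')) L'"
    and wfc: "wfC D (A' # rev As')" by auto
  from wfc obtain i where "hastype D (rev As') A' (DU i)" by (auto elim: wfC.cases)
  from typing_facts(3)[OF this] have okA: "dok D A'" and clA: "dclosed (length As') A'" by auto
  have cA: "cclosed (length As') (btr (blab D) A')" using btr_closed okA clA .
  have cL: "cclosed (Suc (length As')) (btr (blab D) L')" using btr_closed okL clL .
  have uniq: "\<And>As A L B. (l', As, A, L, B) \<notin> set D" using fresh
    by (force simp: labels_def)
  show ?case
  proof (intro conjI allI impI)
    fix l cs m
    assume ex: "\<exists>As A L B. (l, As, A, L, B) \<in> set (e # D) \<and> length cs = length As"
       and cl: "\<forall>c\<in>set cs. cclosed m c"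
    show "cclosed m (blab (e # D) l cs)"
    proof (cases "l = l'")
      case True
      with ex e uniq have len: "length cs = length As'" by auto
      have "cclosed m (cpsubst (cinst cs) (btr (blab D) A'))"
        using cA len cl by (intro cpsubst_closed) (auto simp: cinst_def)
      moreover have "cclosed (Suc m) (cpsubst (cup (cinst cs)) (btr (blab D) L'))"
        using cL len cl
        by (intro cpsubst_closed)
          (auto simp: cinst_def cup_def clift0 less_Suc_eq_0_disj intro!: crename_Suc_closed)
      ultimately show ?thesis using True e by simp
    next
      case False
      with ex e have "\<exists>As A L B. (l, As, A, L, B) \<in> set D \<and> length cs = length As" by auto
      with IH1 cl False e show ?thesis by simp
    qed
  next
    fix l and cs :: "cterm list" and \<tau>
    assume ex: "\<exists>As A L B. (l, As, A, L, B) \<in> set (e # D) \<and> length cs = length As"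
    show "blab (e # D) l (map (cpsubst \<tau>) cs) = cpsubst \<tau> (blab (e # D) l cs)"
    proof (cases "l = l'")
      case True
      with ex e uniq have len: "length cs = length As'" by auto
      have inst: "\<forall>i<length As'. (cpsubst \<tau> \<circ> cinst cs) i = cinst (map (cpsubst \<tau>) cs) i"
        using len by (auto simp: cinst_def rev_map)
      have 1: "cpsubst \<tau> (cpsubst (cinst cs) (btr (blab D) A')) =
               cpsubst (cinst (map (cpsubst \<tau>) cs)) (btr (blab D) A')"
        unfolding cpsubst_comp using cpsubst_cong[OF cA inst] .
      have inst2: "\<forall>i<Suc (length As'). (cpsubst (cup \<tau>) \<circ> cup (cinst cs)) i
                     = cup (cinst (map (cpsubst \<tau>) cs)) i"
      proof (intro allI impI)
        fix i assume "i < Suc (length As')"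
        then show "(cpsubst (cup \<tau>) \<circ> cup (cinst cs)) i = cup (cinst (map (cpsubst \<tau>) cs)) i"
          using len
          by (cases i) (auto simp: cup_def cup_lift_comm cinst_def rev_map)
      qed
      have 2: "cpsubst (cup \<tau>) (cpsubst (cup (cinst cs)) (btr (blab D) L')) =
               cpsubst (cup (cinst (map (cpsubst \<tau>) cs))) (btr (blab D) L')"
        unfolding cpsubst_comp using cpsubst_cong[OF cL inst2] .
      show ?thesis using True e 1 2 by simp
    next
      case False
      with ex e have "\<exists>As A L B. (l, As, A, L, B) \<in> set D \<and> length cs = length As" by auto
      with IH2 False e show ?thesis by simp
    qed
  qed
qed

lemma blab_comm:
  fixes cs :: "cterm list"
  assumes "wfL D" "(l, As, A, L, B) \<in> set D" "length cs = length As"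
  shows "blab D l (map (cpsubst \<tau>) cs) = cpsubst \<tau> (blab D l cs)"
proof -
  have "\<forall>l cs \<tau>. (\<exists>As A L B. (l, As, A, L, B) \<in> set D \<and> length cs = length As) \<longrightarrow>
        blab D l (map (cpsubst \<tau>) cs) = cpsubst \<tau> (blab D l cs)"
    using blab_props[OF assms(1)] by blast
  then show ?thesis using assms(2,3) by blast
qed

lemma bwd_rename:
  assumes "wfL D"
  shows "dok D M \<Longrightarrow> bwd D (drename r M) = crename r (bwd D M)"
proof (induction M arbitrary: r)
  case (DLab l Ms)
  then obtain As A L B where e: "(l, As, A, L, B) \<in> set D" "length Ms = length As" by auto
  have "map (bwd D) (map (drename r) Ms) = map (cpsubst (CVar \<circ> r)) (map (bwd D) Ms)"
    using DLab by (auto intro!: map_cong simp: crename_subst)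
  then have "bwd D (DLab l (map (drename r) Ms)) = blab D l (map (cpsubst (CVar \<circ> r)) (map (bwd D) Ms))"
    by (simp only: bwd_def dpsubst.simps btr.simps)
  also have "\<dots> = cpsubst (CVar \<circ> r) (blab D l (map (bwd D) Ms))"
    by (rule blab_comm[OF assms e(1)]) (simp add: e(2))
  finally show ?case by (simp add: bwd_def crename_subst)
qed (auto simp: bwd_def)

lemma dok_rename: "dok D (drename r M) = dok D M"
  by (induction M arbitrary: r) auto

lemma bwd_subst:
  assumes "wfL D"
  shows "dok D M \<Longrightarrow> (\<forall>i. dok D (\<sigma> i)) \<Longrightarrow> bwd D (dpsubst \<sigma> M) = cpsubst (bwd D \<circ> \<sigma>) (bwd D M)"
proof (induction M arbitrary: \<sigma>)
  case (DPi A B)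
  have ok: "\<forall>i. dok D (dup \<sigma> i)" using DPi.prems
    by (auto simp: dup_def dlift0 dok_rename split: nat.split)
  have "bwd D \<circ> dup \<sigma> = cup (bwd D \<circ> \<sigma>)"
  proof (rule ext)
    fix x show "(bwd D \<circ> dup \<sigma>) x = cup (bwd D \<circ> \<sigma>) x"
      using DPi.prems
      by (cases x) (auto simp: dup_def cup_def dlift0 clift0 bwd_rename[OF assms], simp add: bwd_def)
  qed
  then show ?case using DPi ok by (simp add: bwd_def comp_def)
next
  case (DLab l Ms)
  then obtain As A L B where e: "(l, As, A, L, B) \<in> set D" "length Ms = length As" by auto
  have "map (bwd D) (map (dpsubst \<sigma>) Ms) = map (cpsubst (bwd D \<circ> \<sigma>)) (map (bwd D) Ms)"
    using DLab by (auto intro!: map_cong simp: comp_def)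
  then have "bwd D (dpsubst \<sigma> (DLab l Ms)) = blab D l (map (cpsubst (bwd D \<circ> \<sigma>)) (map (bwd D) Ms))"
    by (simp only: bwd_def dpsubst.simps btr.simps)
  also have "\<dots> = cpsubst (bwd D \<circ> \<sigma>) (blab D l (map (bwd D) Ms))"
    by (rule blab_comm[OF assms e(1)]) (simp add: e(2))
  finally show ?case by (simp add: bwd_def comp_def)
qed (auto simp: bwd_def)

theorem lemma3p19:
  assumes "hastype \<Delta> (A # \<Gamma>) M B"
    and "hastype \<Delta> \<Gamma> N A"
  shows "bwd \<Delta> (dsubst0 M N) = csubst0 (bwd \<Delta> M) (bwd \<Delta> N)"
proof -
  from typing_facts(3)[OF assms(1)] have wf: "wfL \<Delta>" and okM: "dok \<Delta> M" by auto
  from typing_facts(3)[OF assms(2)] have okN: "dok \<Delta> N" by auto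
  let ?\<sigma> = "\<lambda>i. case i of 0 \<Rightarrow> N | Suc j \<Rightarrow> DVar j"
  have ok: "\<forall>i. dok \<Delta> (?\<sigma> i)" using okN by (auto split: nat.split)
  have "bwd \<Delta> \<circ> ?\<sigma> = (\<lambda>i. case i of 0 \<Rightarrow> bwd \<Delta> N | Suc j \<Rightarrow> CVar j)"
    by (rule ext) (auto simp: bwd_def split: nat.split)
  then show ?thesis using bwd_subst[OF wf okM ok] by (simp add: dsubst0_def csubst0_def)
qed

end
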